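(* Let $1\le k\le n$ be integers and $f:\mathbb{F}_2^n\to\mathbb{F}_2$ a Boolean function. Then \[\mathrm{dt}_k(f)=\mathrm{add}_k(f)\prod_{i=n-k+1}^{n}\Big(1-\frac{1}{2^i}\Big).\] Equivalently, $\mathrm{add}_k(f)$ equals the proportion, among all tuples $(u_0,u_1,\dots,u_k)\in(\mathbb{F}_2^n)^{k+1}$ with $u_1,\dots,u_k$ linearly independent, of those for which $\bigoplus_{c_1,\dots,c_k\in\mathbb{F}_2} f\big((\bigoplus_{i=1}^k c_iu_i)\oplus u_0\big)\neq 0$.
   Context: $\oplus$ denotes addition in $\mathbb{F}_2$ and $\mathbb{F}_2^n$. Every Boolean function $f:\mathbb{F}_2^n\to\mathbb{F}_2$ has a unique algebraic normal form (ANF): a polynomial over $\mathbb{F}_2$ in $x_1,\dots,x_n$ of degree at most one in each variable whose polynomial function is $f$. For $1\le k\le n$, define \[\mathrm{dt}_k(f)=\frac{\big|\{(u_0,\dots,u_k)\in(\mathbb{F}_2^n)^{k+1}:\ \bigoplus_{c_1,\dots,c_k\in\mathbb{F}_2} f\big((\bigoplus_{i=1}^k c_iu_i)\oplus u_0\big)\neq0\}\big|}{2^{(k+1)n}}.\] For $M\in GL(n,\mathbb{F}_2)$, $v\in\mathbb{F}_2^n$, let $\varphi_{M,v}(x)=Mx\oplus v$. The degree-$k$ monomial density $\mathrm{dd}_k(f)$ is the number of monomials of degree $k$ having nonzero coefficient in the ANF of $f$ divided by $\binom{n}{k}$. The average degree-$k$ monomial density is \[\mathrm{add}_k(f)=\frac{\sum_{M\in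 GL(n,\mathbb{F}_2),\,v\in\mathbb{F}_2^n}\mathrm{dd}_k(f\circ\varphi_{M,v})}{2^n(2^n-1)(2^n-2)\cdots(2^n-2^{n-1})}.\] *)

theory Defs
  imports Complex_Main "HOL-Library.FuncSet"
begin

text \<open>Vectors of F_2^n are modelled as functions nat => bool (True = 1) vanishing
  outside the indices 0..n-1; addition in F_2 is inequality of booleans (xor).\<close>

definition vecs :: "nat \<Rightarrow> (nat \<Rightarrow> bool) set" where
  "vecs n = {x. \<forall>i. n \<le> i \<longrightarrow> \<not> x i}"

definition vzero :: "nat \<Rightarrow> bool" where
  "vzero = (\<lambda>_. False)"

definition vadd :: "(nat \<Rightarrow> bool) \<Rightarrow> (nat \<Rightarrow> bool) \<Rightarrow> (nat \<Rightarrow> bool)" where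
  "vadd x y = (\<lambda>i. x i \<noteq> y i)"

definition vsum :: "(nat \<Rightarrow> nat \<Rightarrow> bool) \<Rightarrow> nat set \<Rightarrow> (nat \<Rightarrow> bool)" where
  "vsum u C = (\<lambda>j. odd (card {i\<in>C. u i j}))"

text \<open>Derivative-type sum: XOR over c_1..c_k in F_2 of f(sum_i c_i u_i + u_0);
  a choice (c_1,...,c_k) is encoded as the set C of indices i with c_i = 1.\<close>
definition deriv_val :: "((nat \<Rightarrow> bool) \<Rightarrow> bool) \<Rightarrow> nat \<Rightarrow> (nat \<Rightarrow> nat \<Rightarrow> bool) \<Rightarrow> bool" where
  "deriv_val f k u = odd (card {C \<in> Pow {1..k}. f (vadd (vsum u C) (u 0))})"

definition tuples :: "nat \<Rightarrow> nat \<Rightarrow> (nat \<Rightarrow> nat \<Rightarrow> bool) set" where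
  "tuples n k = PiE {0..k} (\<lambda>_. vecs n)"

definition dt :: "nat \<Rightarrow> nat \<Rightarrow> ((nat \<Rightarrow> bool) \<Rightarrow> bool) \<Rightarrow> real" where
  "dt n k f = real (card {u \<in> tuples n k. deriv_val f k u}) / 2 ^ ((k + 1) * n)"

definition lin_indep :: "nat \<Rightarrow> (nat \<Rightarrow> nat \<Rightarrow> bool) \<Rightarrow> bool" where
  "lin_indep k u = (\<forall>C. C \<subseteq> {1..k} \<longrightarrow> C \<noteq> {} \<longrightarrow> vsum u C \<noteq> vzero)"

text \<open>Algebraic normal form: the coefficient function a on subsets S of {0..<n}
  (monomial prod_{i in S} x_i) whose polynomial function agrees with f on F_2^n.\<close>
definition anf :: "nat \<Rightarrow> ((nat \<Rightarrow> bool) \<Rightarrow> bool) \<Rightarrow> nat set \<Rightarrow> bool" where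
  "anf n f = (THE a. (\<forall>S. a S \<longrightarrow> S \<subseteq> {0..<n}) \<and>
      (\<forall>x\<in>vecs n. f x = odd (card {S. S \<subseteq> {0..<n} \<and> a S \<and> (\<forall>i\<in>S. x i)})))"

definition dd :: "nat \<Rightarrow> nat \<Rightarrow> ((nat \<Rightarrow> bool) \<Rightarrow> bool) \<Rightarrow> real" where
  "dd n k f = real (card {S. S \<subseteq> {0..<n} \<and> card S = k \<and> anf n f S}) / real (n choose k)"

definition mats :: "nat \<Rightarrow> (nat \<Rightarrow> nat \<Rightarrow> bool) set" where
  "mats n = {M. \<forall>i j. n \<le> i \<or> n \<le> j \<longrightarrow> \<not> M i j}"

definition matmul :: "nat \<Rightarrow> (nat \<Rightarrow> nat \<Rightarrow> bool) \<Rightarrow> (nat \<Rightarrow> nat \<Rightarrow> bool) \<Rightarrow> (nat \<Rightarrow> nat \<Rightarrow> bool)" where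
  "matmul n M N = (\<lambda>i j. i < n \<and> j < n \<and> odd (card {l\<in>{0..<n}. M i l \<and> N l j}))"

definition idm :: "nat \<Rightarrow> (nat \<Rightarrow> nat \<Rightarrow> bool)" where
  "idm n = (\<lambda>i j. i < n \<and> i = j)"

definition GL :: "nat \<Rightarrow> (nat \<Rightarrow> nat \<Rightarrow> bool) set" where
  "GL n = {M \<in> mats n. \<exists>N \<in> mats n. matmul n M N = idm n}"

definition mulv :: "nat \<Rightarrow> (nat \<Rightarrow> nat \<Rightarrow> bool) \<Rightarrow> (nat \<Rightarrow> bool) \<Rightarrow> (nat \<Rightarrow> bool)" where
  "mulv n M x = (\<lambda>i. i < n \<and> odd (card {j\<in>{0..<n}. M i j \<and> x j}))"

definition aff :: "nat \<Rightarrow> (nat \<Rightarrow> nat \<Rightarrow> bool) \<Rightarrow> (nat \<Rightarrow> bool) \<Rightarrow> (nat \<Rightarrow> bool) \<Rightarrow> (nat \<Rightarrow> bool)" where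
  "aff n M v x = vadd (mulv n M x) v"

definition add_dens :: "nat \<Rightarrow> nat \<Rightarrow> ((nat \<Rightarrow> bool) \<Rightarrow> bool) \<Rightarrow> real" where
  "add_dens n k f =
     (\<Sum>M\<in>GL n. \<Sum>v\<in>vecs n. dd n k (f \<circ> aff n M v)) /
     (2 ^ n * (\<Prod>i<n. (2 ^ n - 2 ^ i)))"

end

theory Submission
  imports Defs "HOL-Library.Z2"
begin


definition ind :: "nat set \<Rightarrow> nat \<Rightarrow> bool" where "ind T = (\<lambda>i. i \<in> T)"

lemma odd_card_bit:
  assumes "finite A"
  shows "of_bool (odd (card {x\<in>A. P x})) = (\<Sum>x\<in>A. of_bool (P x) :: bit)"
proof -
  have "(\<Sum>x\<in>A. of_bool (P x) :: bit) = of_nat (card (A \<inter> {x. P x}))"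
    using assms by simp
  moreover have "A \<inter> {x. P x} = {x\<in>A. P x}" by auto
  moreover have "(of_nat m :: bit) = of_bool (odd m)" for m
    by (induction m) auto
  ultimately show ?thesis by simp
qed

lemma of_bool_xor: "(of_bool (a \<noteq> b) :: bit) = of_bool a + of_bool b"
  by (cases a; cases b) auto

lemma bit_add_self [simp]: "(x::bit) + x = 0"
  by (cases x) auto

lemma of_bool_bit_inj: "(of_bool a :: bit) = of_bool b \<longleftrightarrow> a = b"
  by (cases a; cases b) auto

lemma bit_aux: fixes a b c :: bit shows "a + c = (a + b) + (c + b)"
  by (cases a; cases b; cases c) simp_all

lemma sum_symdiff_bit:
  assumes "finite A" "finite B"
  shows "(\<Sum>x\<in>(A - B) \<union> (B - A). h x :: bit) = sum h A + sum h B"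
proof -
  have "sum h A = sum h (A - B) + sum h (A \<inter> B)"
    using assms by (metis add.commute sum.Int_Diff)
  moreover have "sum h B = sum h (B - A) + sum h (A \<inter> B)"
    using assms by (metis Int_commute add.commute sum.Int_Diff)
  moreover have "(\<Sum>x\<in>(A - B) \<union> (B - A). h x) = sum h (A - B) + sum h (B - A)"
    using assms by (intro sum.union_disjoint) auto
  ultimately show ?thesis using bit_aux by metis
qed

lemma vsum_bit:
  assumes "finite C"
  shows "(of_bool (vsum u C j) :: bit) = (\<Sum>i\<in>C. of_bool (u i j))"
  unfolding vsum_def using odd_card_bit[OF assms] by simp

lemma vsum_symdiff:
  assumes "finite A" "finite B"
  shows "vsum u ((A - B) \<union> (B - A)) = vadd (vsum u A) (vsum u B)"
proof
  fix j
  have "(of_bool (vsum u ((A - B) \<union> (B - A)) j) :: bit) = (\<Sum>i\<in>(A - B) \<union> (B - A). of_bool (u i j))"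
    by (rule vsum_bit) (use assms in simp)
  also have "\<dots> = (\<Sum>i\<in>A. of_bool (u i j)) + (\<Sum>i\<in>B. of_bool (u i j))"
    by (rule sum_symdiff_bit[OF assms])
  also have "\<dots> = of_bool (vsum u A j) + of_bool (vsum u B j)"
    by (simp only: vsum_bit[OF assms(1)] vsum_bit[OF assms(2)])
  also have "\<dots> = of_bool (vadd (vsum u A) (vsum u B) j)"
    by (simp only: vadd_def of_bool_xor)
  finally show "vsum u ((A - B) \<union> (B - A)) j = vadd (vsum u A) (vsum u B) j"
    using of_bool_bit_inj by blast
qed

lemma vsum_insert:
  assumes "finite C" "b \<notin> C"
  shows "vsum u (insert b C) = vadd (u b) (vsum u C)"
proof
  fix j
  have "(of_bool (vsum u (insert b C) j) :: bit) = (\<Sum>i\<in>insert b C. of_bool (u i j))"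
    by (rule vsum_bit) (use assms in simp)
  also have "\<dots> = of_bool (u b j) + (\<Sum>i\<in>C. of_bool (u i j))"
    by (rule sum.insert[OF assms])
  also have "\<dots> = of_bool (u b j) + of_bool (vsum u C j)"
    by (simp only: vsum_bit[OF assms(1)])
  also have "\<dots> = of_bool (vadd (u b) (vsum u C) j)"
    by (simp only: vadd_def of_bool_xor)
  finally show "vsum u (insert b C) j = vadd (u b) (vsum u C) j"
    using of_bool_bit_inj by blast
qed

lemma vsum_empty [simp]: "vsum u {} = vzero"
  by (simp add: vsum_def vzero_def)

lemma vadd_eq_zero: "vadd x y = vzero \<longleftrightarrow> x = y"
  by (auto simp: vadd_def vzero_def fun_eq_iff)

lemma vsum_cong: "(\<And>i. i \<in> C \<Longrightarrow> u i = w i) \<Longrightarrow> vsum u C = vsum w C"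
  unfolding vsum_def by (rule ext) (metis (mono_tags, lifting) mem_Collect_eq Collect_cong)

lemma vsum_vecs: assumes "\<And>i. i \<in> C \<Longrightarrow> u i \<in> vecs n" shows "vsum u C \<in> vecs n"
proof -
  have "\<And>i. n \<le> i \<Longrightarrow> {l\<in>C. u l i} = {}" using assms by (auto simp: vecs_def)
  then show ?thesis unfolding vecs_def vsum_def
    by (intro CollectI allI impI) (metis card.empty even_zero)
qed

lemma vadd_vecs: "x \<in> vecs n \<Longrightarrow> y \<in> vecs n \<Longrightarrow> vadd x y \<in> vecs n"
  unfolding vadd_def vecs_def by auto

lemma vecs_eq: "vecs n = ind ` Pow {0..<n}"
proof
  show "vecs n \<subseteq> ind ` Pow {0..<n}"
  proof
    fix x assume "x \<in> vecs n"
    then have "x = ind {i. x i}" "{i. x i} \<subseteq> {0..<n}"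
      by (auto simp: ind_def vecs_def) (meson not_le)
    then show "x \<in> ind ` Pow {0..<n}" by blast
  qed
  show "ind ` Pow {0..<n} \<subseteq> vecs n" by (auto simp: ind_def vecs_def)
qed

lemma inj_ind: "inj ind"
  by (rule injI) (auto simp: ind_def fun_eq_iff)

lemma card_vecs: "card (vecs n) = 2 ^ n"
  by (simp add: vecs_eq card_image inj_on_subset[OF inj_ind] card_Pow)

lemma finite_vecs [simp]: "finite (vecs n)"
  by (simp add: vecs_eq)



definition indep_on :: "nat set \<Rightarrow> (nat \<Rightarrow> nat \<Rightarrow> bool) \<Rightarrow> bool" where
  "indep_on B w = (\<forall>C. C \<subseteq> B \<longrightarrow> C \<noteq> {} \<longrightarrow> vsum w C \<noteq> vzero)"

definition fspan :: "nat set \<Rightarrow> (nat \<Rightarrow> nat \<Rightarrow> bool) \<Rightarrow> (nat \<Rightarrow> bool) set" where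
  "fspan B w = (\<lambda>C. vsum w C) ` Pow B"

lemma lin_indep_eq: "lin_indep k u = indep_on {1..k} u"
  by (simp add: lin_indep_def indep_on_def)

lemma indep_on_mono: "A \<subseteq> B \<Longrightarrow> indep_on B w \<Longrightarrow> indep_on A w"
  unfolding indep_on_def by blast

lemma indep_on_cong: "(\<And>i. i \<in> B \<Longrightarrow> w i = w' i) \<Longrightarrow> indep_on B w = indep_on B w'"
  unfolding indep_on_def
  by (metis (no_types, lifting) subset_iff vsum_cong)

lemma fspan_cong: "(\<And>i. i \<in> B \<Longrightarrow> w i = w' i) \<Longrightarrow> fspan B w = fspan B w'"
  unfolding fspan_def
  by (intro image_cong refl vsum_cong) auto

lemma fspan_vecs: "(\<And>i. i \<in> B \<Longrightarrow> w i \<in> vecs n) \<Longrightarrow> fspan B w \<subseteq> vecs n"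
  unfolding fspan_def by (auto intro!: vsum_vecs)

lemma indep_inj:
  assumes "finite B" "indep_on B w"
  shows "inj_on (vsum w) (Pow B)"
proof (rule inj_onI)
  fix C1 C2 assume c: "C1 \<in> Pow B" "C2 \<in> Pow B" "vsum w C1 = vsum w C2"
  then have fin: "finite C1" "finite C2" using assms(1) finite_subset by auto
  have z: "vsum w ((C1 - C2) \<union> (C2 - C1)) = vzero"
    using vsum_symdiff[OF fin] c(3) vadd_eq_zero by simp
  have sub: "(C1 - C2) \<union> (C2 - C1) \<subseteq> B" using c by auto
  have "(C1 - C2) \<union> (C2 - C1) = {}"
  proof (rule ccontr)
    assume ne: "(C1 - C2) \<union> (C2 - C1) \<noteq> {}"
    have "vsum w ((C1 - C2) \<union> (C2 - C1)) \<noteq> vzero"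
      using assms(2) sub ne unfolding indep_on_def by simp
    then show False using z by simp
  qed
  then show "C1 = C2" by auto
qed

lemma card_fspan:
  assumes "finite B" "indep_on B w"
  shows "card (fspan B w) = 2 ^ card B"
  unfolding fspan_def using card_image[OF indep_inj[OF assms]] assms(1) by (simp add: card_Pow)

lemma finite_fspan: "finite B \<Longrightarrow> finite (fspan B w)"
  unfolding fspan_def by simp

lemma indep_insert:
  assumes "finite B" "b \<notin> B"
  shows "indep_on (insert b B) w \<longleftrightarrow> indep_on B w \<and> w b \<notin> fspan B w"
proof
  assume a: "indep_on (insert b B) w"
  have "indep_on B w" using indep_on_mono[OF _ a] by blast
  moreover have "w b \<notin> fspan B w"
  proof
    assume "w b \<in> fspan B w"
    then obtain C where C: "C \<subseteq> B" "w b = vsum w C" unfolding fspan_def by auto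
    then have "finite C" "b \<notin> C" using assms finite_subset by auto
    then have "vsum w (insert b C) = vzero"
      using vsum_insert C(2) vadd_eq_zero by simp
    moreover have "insert b C \<subseteq> insert b B" using C by auto
    ultimately show False using a unfolding indep_on_def by blast
  qed
  ultimately show "indep_on B w \<and> w b \<notin> fspan B w" by blast
next
  assume a: "indep_on B w \<and> w b \<notin> fspan B w"
  show "indep_on (insert b B) w"
    unfolding indep_on_def
  proof (intro allI impI)
    fix C assume C: "C \<subseteq> insert b B" "C \<noteq> {}"
    show "vsum w C \<noteq> vzero"
    proof (cases "b \<in> C")
      case False
      then have "C \<subseteq> B" using C by auto
      then show ?thesis using a C unfolding indep_on_def by blast
    next
      case True
      define C' where "C' = C - {b}"
      have C': "C' \<subseteq> B" "C = insert b C'" "b \<notin> C'" "finite C'"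
        using C True assms finite_subset unfolding C'_def by auto
      show ?thesis
      proof
        assume "vsum w C = vzero"
        then have "w b = vsum w C'" using vsum_insert[OF C'(4,3)] C'(2) vadd_eq_zero by simp
        then have "w b \<in> fspan B w" using C'(1) unfolding fspan_def by auto
        then show False using a by blast
      qed
    qed
  qed
qed

lemma indep_on_empty [simp]: "indep_on {} w"
  unfolding indep_on_def by auto

definition Ext :: "nat \<Rightarrow> nat set \<Rightarrow> nat set \<Rightarrow> (nat \<Rightarrow> nat \<Rightarrow> bool) \<Rightarrow> (nat \<Rightarrow> nat \<Rightarrow> bool) set" where
  "Ext n B A w0 = {w \<in> PiE B (\<lambda>_. vecs n). indep_on B w \<and> (\<forall>a\<in>A. w a = w0 a)}"

lemma finite_Ext: "finite B \<Longrightarrow> finite (Ext n B A w0)"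
  unfolding Ext_def by (rule finite_subset[of _ "PiE B (\<lambda>_. vecs n)"]) (auto intro: finite_PiE)

lemma Ext_base:
  assumes "indep_on A w0" "\<forall>a\<in>A. w0 a \<in> vecs n"
  shows "Ext n A A w0 = {restrict w0 A}"
proof -
  have "restrict w0 A \<in> Ext n A A w0"
    unfolding Ext_def using assms indep_on_cong[of A "restrict w0 A" w0] by auto
  moreover have "w = restrict w0 A" if "w \<in> Ext n A A w0" for w
    using that unfolding Ext_def by (auto simp: PiE_def extensional_def fun_eq_iff)
  ultimately show ?thesis by blast
qed

lemma Ext_step:
  assumes fin: "finite B" and b: "b \<notin> B" and AB: "A \<subseteq> B"
  shows "card (Ext n (insert b B) A w0) = card (Ext n B A w0) * (2 ^ n - 2 ^ card B)"
proof -
  let ?h = "\<lambda>w. (restrict w B, w b)"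
  let ?g = "\<lambda>(w, x). w(b := x)"
  let ?S = "SIGMA w:Ext n B A w0. vecs n - fspan B w"
  have bij: "bij_betw ?h (Ext n (insert b B) A w0) ?S"
  proof (rule bij_betw_byWitness[where f' = ?g])
    show "\<forall>w\<in>Ext n (insert b B) A w0. ?g (?h w) = w"
      unfolding Ext_def by (auto simp: PiE_def extensional_def fun_eq_iff)
    show "\<forall>p\<in>?S. ?h (?g p) = p"
      using b unfolding Ext_def by (auto simp: PiE_def extensional_def fun_eq_iff)
    show "?h ` Ext n (insert b B) A w0 \<subseteq> ?S"
    proof
      fix p assume "p \<in> ?h ` Ext n (insert b B) A w0"
      then obtain w where w: "w \<in> Ext n (insert b B) A w0" "p = ?h w" by blast
      have ind: "indep_on B w \<and> w b \<notin> fspan B w"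
        using w(1) indep_insert[OF fin b] unfolding Ext_def by blast
      have "indep_on B (restrict w B)" using ind indep_on_cong[of B "restrict w B" w] by simp
      moreover have "fspan B (restrict w B) = fspan B w" by (rule fspan_cong) simp
      ultimately show "p \<in> ?S" using w AB ind unfolding Ext_def by auto
    qed
    show "?g ` ?S \<subseteq> Ext n (insert b B) A w0"
    proof
      fix q assume "q \<in> ?g ` ?S"
      then obtain w x where wx: "w \<in> Ext n B A w0" "x \<in> vecs n - fspan B w" "q = w(b := x)" by auto
      have "indep_on B (w(b := x)) = indep_on B w" using b by (intro indep_on_cong) auto
      then have "indep_on B (w(b := x))" using wx unfolding Ext_def by auto
      moreover have "fspan B (w(b := x)) = fspan B w" using b by (intro fspan_cong) auto
      ultimately have "indep_on (insert b B) (w(b := x))"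
        using indep_insert[OF fin b] wx by simp
      then show "q \<in> Ext n (insert b B) A w0"
        using wx AB b unfolding Ext_def by (auto simp: PiE_def extensional_def)
    qed
  qed
  have "card (Ext n (insert b B) A w0) = card ?S" using bij_betw_same_card[OF bij] .
  also have "\<dots> = (\<Sum>w\<in>Ext n B A w0. card (vecs n - fspan B w))"
    using finite_Ext[OF fin] by (intro card_SigmaI) auto
  also have "\<dots> = (\<Sum>w\<in>Ext n B A w0. 2 ^ n - 2 ^ card B)"
  proof (rule sum.cong[OF refl])
    fix w assume w: "w \<in> Ext n B A w0"
    have "fspan B w \<subseteq> vecs n" using w unfolding Ext_def by (intro fspan_vecs) auto
    then have "card (vecs n - fspan B w) = card (vecs n) - card (fspan B w)"
      by (intro card_Diff_subset finite_fspan fin)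
    then show "card (vecs n - fspan B w) = 2 ^ n - 2 ^ card B"
      using card_fspan[OF fin] w card_vecs unfolding Ext_def by simp
  qed
  finally show ?thesis by simp
qed

lemma Ext_card_aux:
  assumes "finite F" "finite A" "A \<inter> F = {}" "indep_on A w0" "\<forall>a\<in>A. w0 a \<in> vecs n"
  shows "card (Ext n (A \<union> F) A w0) = (\<Prod>i\<in>{card A..<card A + card F}. 2 ^ n - 2 ^ i)"
  using assms(1,3)
proof (induction F rule: finite_induct)
  case empty
  then show ?case using Ext_base[OF assms(4,5)] by simp
next
  case (insert b F)
  have "A \<union> insert b F = insert b (A \<union> F)" by auto
  moreover have "card (A \<union> F) = card A + card F"
    using insert assms(2) by (intro card_Un_disjoint) auto
  moreover have "b \<notin> A \<union> F" using insert by auto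
  ultimately have "card (Ext n (A \<union> insert b F) A w0) = card (Ext n (A \<union> F) A w0) * (2 ^ n - 2 ^ (card A + card F))"
    using Ext_step[of "A \<union> F" b A n w0] insert assms(2) by simp
  then show ?case using insert by simp
qed

lemma Ext_card:
  assumes "finite B" "A \<subseteq> B" "indep_on A w0" "\<forall>a\<in>A. w0 a \<in> vecs n"
  shows "card (Ext n B A w0) = (\<Prod>i\<in>{card A..<card B}. 2 ^ n - 2 ^ i)"
proof -
  have "B = A \<union> (B - A)" using assms by auto
  moreover have "card B = card A + card (B - A)"
    using assms by (metis card_Diff_subset card_mono diff_add_inverse le_add_diff_inverse finite_subset)
  ultimately show ?thesis using Ext_card_aux[of "B - A" A w0 n] assms finite_subset
    by (metis Diff_disjoint finite_Diff)
qed

lemma dep_deriv: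
  assumes "\<not> lin_indep k u"
  shows "\<not> deriv_val f k u"
proof -
  obtain C0 where C0: "C0 \<subseteq> {1..k}" "C0 \<noteq> {}" "vsum u C0 = vzero"
    using assms unfolding lin_indep_def by blast
  obtain i0 where i0: "i0 \<in> C0" using C0 by blast
  let ?P = "\<lambda>C. f (vadd (vsum u C) (u 0))"
  let ?X = "{C \<in> Pow {1..k}. ?P C}"
  let ?t = "\<lambda>C. (C - C0) \<union> (C0 - C)"
  have fin0: "finite C0" using C0 finite_subset by blast
  have tP: "?P (?t C) = ?P C" if "C \<in> Pow {1..k}" for C
  proof -
    have "finite C" using that finite_subset by blast
    then have "vsum u (?t C) = vsum u C" using vsum_symdiff[OF _ fin0] C0(3)
      by (simp add: vadd_def vzero_def)
    then show ?thesis by simp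
  qed
  have tt: "?t (?t C) = C" for C by auto
  have tmem: "?t C \<in> Pow {1..k}" if "C \<in> Pow {1..k}" for C using that C0(1) by auto
  have bij: "bij_betw ?t {C\<in>?X. i0 \<notin> C} {C\<in>?X. i0 \<in> C}"
  proof (rule bij_betw_byWitness[where f' = ?t])
    show "\<forall>a\<in>{C\<in>?X. i0 \<notin> C}. ?t (?t a) = a" using tt by blast
    show "\<forall>a\<in>{C\<in>?X. i0 \<in> C}. ?t (?t a) = a" using tt by blast
    show "?t ` {C\<in>?X. i0 \<notin> C} \<subseteq> {C\<in>?X. i0 \<in> C}"
    proof
      fix D assume "D \<in> ?t ` {C\<in>?X. i0 \<notin> C}"
      then obtain C where C: "C \<in> Pow {1..k}" "?P C" "i0 \<notin> C" "D = ?t C" by blast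
      have "i0 \<in> D" using C i0 by blast
      moreover have "D \<in> Pow {1..k}" using tmem C by blast
      moreover have "?P D" using tP C by blast
      ultimately show "D \<in> {C\<in>?X. i0 \<in> C}" by blast
    qed
    show "?t ` {C\<in>?X. i0 \<in> C} \<subseteq> {C\<in>?X. i0 \<notin> C}"
    proof
      fix D assume "D \<in> ?t ` {C\<in>?X. i0 \<in> C}"
      then obtain C where C: "C \<in> Pow {1..k}" "?P C" "i0 \<in> C" "D = ?t C" by blast
      have "i0 \<notin> D" using C i0 by blast
      moreover have "D \<in> Pow {1..k}" using tmem C by blast
      moreover have "?P D" using tP C by blast
      ultimately show "D \<in> {C\<in>?X. i0 \<notin> C}" by blast
    qed
  qed
  have finX: "finite ?X" by simp
  have "?X = {C\<in>?X. i0 \<notin> C} \<union> {C\<in>?X. i0 \<in> C}" by blast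
  then have "card ?X = card ({C\<in>?X. i0 \<notin> C} \<union> {C\<in>?X. i0 \<in> C})" by (rule arg_cong)
  also have "\<dots> = card {C\<in>?X. i0 \<notin> C} + card {C\<in>?X. i0 \<in> C}"
    by (rule card_Un_disjoint) (use finX in auto)
  also have "\<dots> = 2 * card {C\<in>?X. i0 \<notin> C}" using bij_betw_same_card[OF bij] by simp
  finally show ?thesis unfolding deriv_val_def by simp
qed



declare sum_of_bool_eq[simp del]

lemma sum_Pow_insert:
  assumes "finite S" "x \<notin> S"
  shows "(\<Sum>T\<in>Pow (insert x S). g T) = (\<Sum>T\<in>Pow S. g T) + (\<Sum>T\<in>Pow S. g (insert x T))"
proof -
  have "(\<Sum>T\<in>Pow (insert x S). g T) = (\<Sum>T\<in>Pow S \<union> insert x ` Pow S. g T)"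
    by (simp add: Pow_insert)
  also have "\<dots> = (\<Sum>T\<in>Pow S. g T) + (\<Sum>T\<in>insert x ` Pow S. g T)"
    using assms by (intro sum.union_disjoint) auto
  also have "(\<Sum>T\<in>insert x ` Pow S. g T) = (\<Sum>T\<in>Pow S. g (insert x T))"
  proof (rule sum.reindex_cong[of "insert x"])
    show "inj_on (insert x) (Pow S)"
      using assms by (intro inj_onI) (metis Pow_iff insert_ident subsetD)
  qed auto
  finally show ?thesis .
qed

lemma moebius_bit:
  assumes "finite X"
  shows "(\<Sum>S\<in>Pow X. \<Sum>T\<in>Pow S. h T :: bit) = h X"
  using assms
proof (induction X arbitrary: h rule: finite_induct)
  case empty
  then show ?case by simp
next
  case (insert x X)
  have fS: "finite S" "x \<notin> S" if "S \<in> Pow X" for S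
    using that insert finite_subset by auto
  have "(\<Sum>S\<in>Pow (insert x X). \<Sum>T\<in>Pow S. h T) =
        (\<Sum>S\<in>Pow X. \<Sum>T\<in>Pow S. h T) + (\<Sum>S\<in>Pow X. \<Sum>T\<in>Pow (insert x S). h T)"
    by (rule sum_Pow_insert[OF insert(1,2)])
  also have "(\<Sum>S\<in>Pow X. \<Sum>T\<in>Pow (insert x S). h T) =
        (\<Sum>S\<in>Pow X. (\<Sum>T\<in>Pow S. h T) + (\<Sum>T\<in>Pow S. h (insert x T)))"
    by (rule sum.cong[OF refl]) (rule sum_Pow_insert[OF fS])
  also have "\<dots> = (\<Sum>S\<in>Pow X. \<Sum>T\<in>Pow S. h T) + (\<Sum>S\<in>Pow X. \<Sum>T\<in>Pow S. h (insert x T))"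
    by (rule sum.distrib)
  also have "(\<Sum>S\<in>Pow X. \<Sum>T\<in>Pow S. h (insert x T)) = h (insert x X)"
    using insert(3)[of "\<lambda>T. h (insert x T)"] by simp
  finally show ?case by (simp only: add.assoc[symmetric] bit_add_self add_0_left)
qed

definition anf_prop :: "nat \<Rightarrow> ((nat \<Rightarrow> bool) \<Rightarrow> bool) \<Rightarrow> (nat set \<Rightarrow> bool) \<Rightarrow> bool" where
  "anf_prop n g a = ((\<forall>S. a S \<longrightarrow> S \<subseteq> {0..<n}) \<and>
      (\<forall>x\<in>vecs n. g x = odd (card {S. S \<subseteq> {0..<n} \<and> a S \<and> (\<forall>i\<in>S. x i)})))"

lemma anf_prop_ind:
  assumes "anf_prop n g a" "X \<subseteq> {0..<n}"
  shows "(of_bool (g (ind X)) :: bit) = (\<Sum>S\<in>Pow X. of_bool (a S))"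
proof -
  have "ind X \<in> vecs n" using assms(2) by (auto simp: vecs_eq)
  then have "g (ind X) = odd (card {S. S \<subseteq> {0..<n} \<and> a S \<and> (\<forall>i\<in>S. ind X i)})"
    using assms(1) unfolding anf_prop_def by blast
  also have "{S. S \<subseteq> {0..<n} \<and> a S \<and> (\<forall>i\<in>S. ind X i)} = {S\<in>Pow X. a S}"
    using assms(2) by (auto simp: ind_def)
  finally have "g (ind X) = odd (card {S\<in>Pow X. a S})" .
  moreover have "finite (Pow X)" using assms(2) finite_subset by auto
  ultimately show ?thesis using odd_card_bit[of "Pow X" a] by simp
qed

definition anf0 :: "nat \<Rightarrow> ((nat \<Rightarrow> bool) \<Rightarrow> bool) \<Rightarrow> nat set \<Rightarrow> bool" where
  "anf0 n g S = (S \<subseteq> {0..<n} \<and> (\<Sum>T\<in>Pow S. of_bool (g (ind T)) :: bit) = 1)"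

lemma of_bool_eq_1: "(of_bool (b = 1) :: bit) = b"
  by (cases b) auto

lemma of_bool_eq_one_iff: "((of_bool b :: bit) = 1) = b"
  by (cases b) auto

lemma anf0_prop: "anf_prop n g (anf0 n g)"
  unfolding anf_prop_def
proof (intro conjI allI impI ballI)
  fix S assume "anf0 n g S" then show "S \<subseteq> {0..<n}" by (simp add: anf0_def)
next
  fix x assume x: "x \<in> vecs n"
  then obtain X where X: "X \<subseteq> {0..<n}" "x = ind X" by (auto simp: vecs_eq)
  have finX: "finite X" using X finite_subset by blast
  have "{S. S \<subseteq> {0..<n} \<and> anf0 n g S \<and> (\<forall>i\<in>S. x i)} = {S\<in>Pow X. anf0 n g S}"
    using X by (auto simp: ind_def anf0_def)
  then have "(of_bool (odd (card {S. S \<subseteq> {0..<n} \<and> anf0 n g S \<and> (\<forall>i\<in>S. x i)})) :: bit)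
      = (\<Sum>S\<in>Pow X. of_bool (anf0 n g S))"
    using odd_card_bit[of "Pow X" "anf0 n g"] finX by simp
  also have "\<dots> = (\<Sum>S\<in>Pow X. \<Sum>T\<in>Pow S. of_bool (g (ind T)))"
  proof (rule sum.cong[OF refl])
    fix S assume "S \<in> Pow X"
    then have "S \<subseteq> {0..<n}" using X by auto
    then have "anf0 n g S = ((\<Sum>T\<in>Pow S. of_bool (g (ind T)) :: bit) = 1)"
      unfolding anf0_def by (simp only: simp_thms)
    then show "of_bool (anf0 n g S) = (\<Sum>T\<in>Pow S. of_bool (g (ind T)) :: bit)"
      by (simp only: of_bool_eq_1)
  qed
  also have "\<dots> = of_bool (g x)" using moebius_bit[OF finX] X by simp
  finally have "odd (card {S. S \<subseteq> {0..<n} \<and> anf0 n g S \<and> (\<forall>i\<in>S. x i)}) = g x"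
    by (simp only: of_bool_bit_inj)
  then show "g x = odd (card {S. S \<subseteq> {0..<n} \<and> anf0 n g S \<and> (\<forall>i\<in>S. x i)})"
    by (rule sym)
qed

lemma anf_prop_unique:
  assumes "anf_prop n g a"
  shows "a = anf0 n g"
proof
  fix S
  show "a S = anf0 n g S"
  proof (cases "S \<subseteq> {0..<n}")
    case False
    then show ?thesis using assms unfolding anf_prop_def anf0_def by blast
  next
    case True
    have finS: "finite S" using True finite_subset by blast
    have "(\<Sum>T\<in>Pow S. of_bool (g (ind T)) :: bit) = (\<Sum>T\<in>Pow S. \<Sum>U\<in>Pow T. of_bool (a U))"
      using True by (intro sum.cong[OF refl] anf_prop_ind[OF assms]) auto
    also have "\<dots> = of_bool (a S)" by (rule moebius_bit[OF finS])
    finally have e: "(\<Sum>T\<in>Pow S. of_bool (g (ind T)) :: bit) = of_bool (a S)" .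
    show ?thesis unfolding anf0_def by (simp only: True e simp_thms of_bool_eq_one_iff)
  qed
qed

lemma anf_eq: "anf n g = anf0 n g"
proof -
  have "anf n g = (THE a. anf_prop n g a)" unfolding anf_def anf_prop_def by simp
  also have "\<dots> = anf0 n g"
    by (rule the_equality) (rule anf0_prop, erule anf_prop_unique)
  finally show ?thesis .
qed


declare sum_of_bool_eq[simp del]

definition cols :: "nat \<Rightarrow> (nat \<Rightarrow> nat \<Rightarrow> bool) \<Rightarrow> (nat \<Rightarrow> nat \<Rightarrow> bool)" where
  "cols n M = (\<lambda>j\<in>{0..<n}. \<lambda>i. M i j)"

lemma mulv_ind:
  assumes "M \<in> mats n" "X \<subseteq> {0..<n}"
  shows "mulv n M (ind X) = vsum (cols n M) X"
proof
  fix i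
  have e: "{j\<in>{0..<n}. M i j \<and> ind X j} = {j\<in>X. M i j}" using assms(2) by (auto simp: ind_def)
  have e2: "{j\<in>X. cols n M j i} = {j\<in>X. M i j}" using assms(2) by (auto simp: cols_def)
  have "card {j\<in>X. M i j} = 0" if ni: "\<not> i < n"
  proof -
    have "{j\<in>X. M i j} = {}" using assms(1) ni by (auto simp: mats_def)
    then show ?thesis by (rule ssubst) (rule card.empty)
  qed
  then show "mulv n M (ind X) i = vsum (cols n M) X i"
    unfolding mulv_def vsum_def e e2 by (cases "i < n") auto
qed

lemma mulv_vecs: "mulv n M x \<in> vecs n"
  by (simp add: mulv_def vecs_def)

lemma ind_vadd: "vadd (ind X) (ind Y) = ind ((X - Y) \<union> (Y - X))"
  by (auto simp: vadd_def ind_def fun_eq_iff)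

lemma cols_vecs: "M \<in> mats n \<Longrightarrow> j \<in> {0..<n} \<Longrightarrow> cols n M j \<in> vecs n"
  by (auto simp: cols_def mats_def vecs_def)

lemma cols_PiE: "M \<in> mats n \<Longrightarrow> cols n M \<in> PiE {0..<n} (\<lambda>_. vecs n)"
  using cols_vecs by (auto simp: cols_def)

lemma mulv_lin:
  assumes M: "M \<in> mats n" and x: "x \<in> vecs n" and y: "y \<in> vecs n"
  shows "mulv n M (vadd x y) = vadd (mulv n M x) (mulv n M y)"
proof -
  obtain X where X: "X \<in> Pow {0..<n}" "x = ind X" using x unfolding vecs_eq by blast
  obtain Y where Y: "Y \<in> Pow {0..<n}" "y = ind Y" using y unfolding vecs_eq by blast
  have XY: "X \<subseteq> {0..<n}" "Y \<subseteq> {0..<n}" using X(1) Y(1) by auto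
  have sd: "(X - Y) \<union> (Y - X) \<subseteq> {0..<n}" using XY by blast
  have fin: "finite X" "finite Y" using XY finite_subset by auto
  have "mulv n M (vadd (ind X) (ind Y)) = vsum (cols n M) ((X - Y) \<union> (Y - X))"
    unfolding ind_vadd by (rule mulv_ind[OF M sd])
  also have "\<dots> = vadd (vsum (cols n M) X) (vsum (cols n M) Y)"
    by (rule vsum_symdiff[OF fin])
  also have "\<dots> = vadd (mulv n M (ind X)) (mulv n M (ind Y))"
    by (simp only: mulv_ind[OF M XY(1)] mulv_ind[OF M XY(2)])
  finally show ?thesis unfolding X(2) Y(2) .
qed

lemma mulv_surj:
  assumes M: "M \<in> mats n" and ej: "\<And>j. j < n \<Longrightarrow> ind {j} \<in> mulv n M ` vecs n"
  shows "mulv n M ` vecs n = vecs n"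
proof -
  have allX: "ind X \<in> mulv n M ` vecs n" if "X \<subseteq> {0..<n}" for X
  proof -
    have "finite X" using that finite_subset by blast
    then show ?thesis using that
    proof (induction X rule: finite_induct)
      case empty
      have e1: "mulv n M (ind {}) = vzero" using mulv_ind[OF M, of "{}"] by simp
      have e2: "ind {} = vzero" by (simp add: ind_def vzero_def)
      have e3: "ind {} \<in> vecs n" by (simp add: vecs_eq)
      have "ind {} = mulv n M (ind {})" using e1 e2 by simp
      then show ?case by (rule image_eqI[where f="mulv n M", OF _ e3])
    next
      case (insert j X)
      have jX: "X \<subseteq> {0..<n}" "j < n" using insert.prems by auto
      have iX: "ind X \<in> mulv n M ` vecs n" by (rule insert.IH[OF jX(1)])
      obtain y where y: "ind X = mulv n M y" "y \<in> vecs n" using iX by (rule imageE)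
      have ij: "ind {j} \<in> mulv n M ` vecs n" by (rule ej[OF jX(2)])
      obtain z where z: "ind {j} = mulv n M z" "z \<in> vecs n" using ij by (rule imageE)
      have e1: "mulv n M (vadd z y) = vadd (ind {j}) (ind X)"
        unfolding y(1) z(1) by (rule mulv_lin[OF M z(2) y(2)])
      have e2: "vadd (ind {j}) (ind X) = ind (insert j X)"
        using insert.hyps by (auto simp: vadd_def ind_def fun_eq_iff)
      have e3: "vadd z y \<in> vecs n" using z(2) y(2) by (rule vadd_vecs)
      have "ind (insert j X) = mulv n M (vadd z y)" unfolding e1 e2 ..
      then show ?case by (rule image_eqI[where f="mulv n M", OF _ e3])
    qed
  qed
  show ?thesis
  proof
    show "mulv n M ` vecs n \<subseteq> vecs n" using mulv_vecs by blast
    show "vecs n \<subseteq> mulv n M ` vecs n"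
    proof
      fix x assume "x \<in> vecs n"
      then obtain X where "X \<in> Pow {0..<n}" "x = ind X" unfolding vecs_eq by blast
      then show "x \<in> mulv n M ` vecs n" using allX by blast
    qed
  qed
qed

lemma GL_char1:
  assumes "M \<in> GL n"
  shows "M \<in> mats n \<and> indep_on {0..<n} (cols n M)"
proof -
  obtain N where M: "M \<in> mats n" and N: "N \<in> mats n" "matmul n M N = idm n"
    using assms unfolding GL_def by blast
  have ej: "ind {j} \<in> mulv n M ` vecs n" if "j < n" for j
  proof -
    have e1: "mulv n M (\<lambda>l. N l j) = ind {j}"
    proof
      fix i
      have a1: "mulv n M (\<lambda>l. N l j) i = matmul n M N i j"
        using that unfolding mulv_def matmul_def by simp
      have a2: "idm n i j = ind {j} i" using that unfolding idm_def ind_def by auto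
      show "mulv n M (\<lambda>l. N l j) i = ind {j} i" unfolding a1 N(2) a2 ..
    qed
    have e3: "(\<lambda>l. N l j) \<in> vecs n" using N(1) by (auto simp: mats_def vecs_def)
    show ?thesis by (rule image_eqI[where f="mulv n M", OF e1[symmetric] e3])
  qed
  have surj: "mulv n M ` vecs n = vecs n" by (rule mulv_surj[OF M ej])
  have inj: "inj_on (mulv n M) (vecs n)"
    by (rule eq_card_imp_inj_on[OF finite_vecs]) (simp only: surj)
  have "indep_on {0..<n} (cols n M)"
    unfolding indep_on_def
  proof (intro allI impI notI)
    fix C assume C: "C \<subseteq> {0..<n}" "C \<noteq> {}" "vsum (cols n M) C = vzero"
    have "mulv n M (ind C) = vzero" using mulv_ind[OF M C(1)] C(3) by simp
    moreover have "mulv n M (ind {}) = vzero" using mulv_ind[OF M, of "{}"] by simp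
    ultimately have eq: "mulv n M (ind C) = mulv n M (ind {})" by simp
    have v: "ind C \<in> vecs n" "ind {} \<in> vecs n" using C(1) unfolding vecs_eq by auto
    have "ind C = ind {}" using inj v eq unfolding inj_on_def by blast
    then have "C = {}" by (rule injD[OF inj_ind])
    then show False using C(2) by blast
  qed
  then show ?thesis using M by blast
qed

lemma GL_char2:
  assumes a: "M \<in> mats n" "indep_on {0..<n} (cols n M)"
  shows "M \<in> GL n"
proof -
  have inj: "inj_on (mulv n M) (vecs n)"
  proof (rule inj_onI)
    fix x y assume xy: "x \<in> vecs n" "y \<in> vecs n" "mulv n M x = mulv n M y"
    obtain X where X: "X \<in> Pow {0..<n}" "x = ind X" using xy(1) unfolding vecs_eq by blast
    obtain Y where Y: "Y \<in> Pow {0..<n}" "y = ind Y" using xy(2) unfolding vecs_eq by blast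
    have XY: "X \<subseteq> {0..<n}" "Y \<subseteq> {0..<n}" using X(1) Y(1) by auto
    have "vsum (cols n M) X = vsum (cols n M) Y"
      using xy(3) unfolding X(2) Y(2) mulv_ind[OF a(1) XY(1)] mulv_ind[OF a(1) XY(2)] .
    moreover have "inj_on (vsum (cols n M)) (Pow {0..<n})" by (rule indep_inj[OF _ a(2)]) simp
    ultimately have "X = Y" using X(1) Y(1) unfolding inj_on_def by blast
    then show "x = y" using X Y by simp
  qed
  have surj: "mulv n M ` vecs n = vecs n"
    by (rule endo_inj_surj[OF finite_vecs _ inj]) (use mulv_vecs in blast)
  define y where "y j = (SOME z. z \<in> vecs n \<and> mulv n M z = ind {j})" for j
  have y: "y j \<in> vecs n \<and> mulv n M (y j) = ind {j}" if "j < n" for j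
  proof -
    have "ind {j} \<in> vecs n" using that unfolding vecs_eq by auto
    then have "ind {j} \<in> mulv n M ` vecs n" unfolding surj .
    then obtain z where z: "ind {j} = mulv n M z" "z \<in> vecs n" by (rule imageE)
    then have "\<exists>z. z \<in> vecs n \<and> mulv n M z = ind {j}" by (intro exI[of _ z]) simp
    then show ?thesis unfolding y_def by (rule someI_ex)
  qed
  define N where "N = (\<lambda>l j. j < n \<and> y j l)"
  have "N \<in> mats n"
    unfolding mats_def
  proof (intro CollectI allI impI)
    fix i j assume "n \<le> i \<or> n \<le> j"
    then show "\<not> N i j"
    proof
      assume "n \<le> i"
      then show ?thesis using y unfolding N_def vecs_def by blast
    next
      assume "n \<le> j" then show ?thesis unfolding N_def by simp
    qed
  qed
  moreover have "matmul n M N = idm n"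
  proof (intro ext)
    fix i j
    show "matmul n M N i j = idm n i j"
    proof (cases "j < n")
      case True
      have s: "{l\<in>{0..<n}. M i l \<and> N l j} = {l\<in>{0..<n}. M i l \<and> y j l}"
        using True unfolding N_def by simp
      have "matmul n M N i j = mulv n M (y j) i"
        unfolding matmul_def mulv_def s using True by simp
      also have "\<dots> = ind {j} i" using y[OF True] by simp
      also have "\<dots> = idm n i j" using True unfolding ind_def idm_def by auto
      finally show ?thesis .
    next
      case False
      then show ?thesis unfolding matmul_def idm_def by auto
    qed
  qed
  ultimately show "M \<in> GL n" using a(1) unfolding GL_def by blast
qed

lemma GL_char: "M \<in> GL n \<longleftrightarrow> M \<in> mats n \<and> indep_on {0..<n} (cols n M)"
  using GL_char1 GL_char2 by blast

lemma mat_cols: "M \<in> mats n \<Longrightarrow> (\<lambda>i j. j < n \<and> cols n M j i) = M"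
  by (auto simp: mats_def cols_def fun_eq_iff)

lemma cols_mat: "w \<in> PiE {0..<n} (\<lambda>_. vecs n) \<Longrightarrow> cols n (\<lambda>i j. j < n \<and> w j i) = w"
proof -
  assume w: "w \<in> PiE {0..<n} (\<lambda>_. vecs n)"
  then have ext: "w \<in> extensional {0..<n}" by (simp add: PiE_def)
  show ?thesis unfolding cols_def
    by (rule extensionalityI[OF restrict_extensional ext]) auto
qed

lemma mat_mats: "w \<in> PiE {0..<n} (\<lambda>_. vecs n) \<Longrightarrow> (\<lambda>i j. j < n \<and> w j i) \<in> mats n"
  unfolding mats_def vecs_def PiE_def Pi_def by auto

lemma GL_fiber_bij:
  assumes S: "S \<subseteq> {0..<n}"
  shows "bij_betw (cols n) {M \<in> GL n. \<forall>a\<in>S. (\<lambda>i. M i a) = w0 a} (Ext n {0..<n} S w0)"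
proof (rule bij_betw_byWitness[where f' = "\<lambda>w i j. j < n \<and> w j i"])
  show "\<forall>M\<in>{M \<in> GL n. \<forall>a\<in>S. (\<lambda>i. M i a) = w0 a}. (\<lambda>i j. j < n \<and> cols n M j i) = M"
    using mat_cols unfolding GL_def by blast
  show "\<forall>w\<in>Ext n {0..<n} S w0. cols n (\<lambda>i j. j < n \<and> w j i) = w"
    using cols_mat unfolding Ext_def by blast
  show "cols n ` {M \<in> GL n. \<forall>a\<in>S. (\<lambda>i. M i a) = w0 a} \<subseteq> Ext n {0..<n} S w0"
  proof
    fix w assume "w \<in> cols n ` {M \<in> GL n. \<forall>a\<in>S. (\<lambda>i. M i a) = w0 a}"
    then obtain M where M: "M \<in> GL n" "\<forall>a\<in>S. (\<lambda>i. M i a) = w0 a" "w = cols n M" by blast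
    have g: "M \<in> mats n" "indep_on {0..<n} (cols n M)" using GL_char1[OF M(1)] by auto
    have "\<forall>a\<in>S. cols n M a = w0 a" using M(2) S unfolding cols_def by auto
    then show "w \<in> Ext n {0..<n} S w0" using g cols_PiE[OF g(1)] M(3) unfolding Ext_def by blast
  qed
  show "(\<lambda>w i j. j < n \<and> w j i) ` Ext n {0..<n} S w0 \<subseteq> {M \<in> GL n. \<forall>a\<in>S. (\<lambda>i. M i a) = w0 a}"
  proof
    fix M assume "M \<in> (\<lambda>w i j. j < n \<and> w j i) ` Ext n {0..<n} S w0"
    then obtain w where w: "w \<in> Ext n {0..<n} S w0" "M = (\<lambda>i j. j < n \<and> w j i)" by blast
    have wp: "w \<in> PiE {0..<n} (\<lambda>_. vecs n)" "indep_on {0..<n} w" "\<forall>a\<in>S. w a = w0 a"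
      using w(1) unfolding Ext_def by auto
    have cw: "cols n M = w" using cols_mat[OF wp(1)] w(2) by simp
    have mm: "M \<in> mats n" using mat_mats[OF wp(1)] w(2) by simp
    have "M \<in> GL n" using GL_char2[OF mm] cw wp(2) by simp
    moreover have "\<forall>a\<in>S. (\<lambda>i. M i a) = w0 a"
    proof
      fix a assume a: "a \<in> S"
      then have "a < n" using S by auto
      then show "(\<lambda>i. M i a) = w0 a" using wp(3) a w(2) by simp
    qed
    ultimately show "M \<in> {M \<in> GL n. \<forall>a\<in>S. (\<lambda>i. M i a) = w0 a}" by blast
  qed
qed

lemma finite_mats: "finite (mats n)"
proof -
  have "mats n \<subseteq> (\<lambda>R i j. (i, j) \<in> R) ` Pow ({0..<n} \<times> {0..<n})"
  proof
    fix M assume M: "M \<in> mats n"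
    have e: "M = (\<lambda>i j. (i, j) \<in> {(i, j). M i j})" by simp
    have "{(i, j). M i j} \<subseteq> {0..<n} \<times> {0..<n}"
    proof
      fix p assume "p \<in> {(i, j). M i j}"
      then obtain i j where p: "p = (i, j)" "M i j" by blast
      then have "\<not> n \<le> i" "\<not> n \<le> j" using M unfolding mats_def by blast+
      then have "i < n" "j < n" by simp_all
      then show "p \<in> {0..<n} \<times> {0..<n}" using p by simp
    qed
    then show "M \<in> (\<lambda>R i j. (i, j) \<in> R) ` Pow ({0..<n} \<times> {0..<n})"
      using e by blast
  qed
  then show ?thesis by (rule finite_subset) simp
qed

lemma finite_GL: "finite (GL n)"
  by (rule finite_subset[OF _ finite_mats]) (auto simp: GL_def)

lemma card_GL_fiber:
  assumes "S \<subseteq> {0..<n}" "indep_on S w0" "\<forall>a\<in>S. w0 a \<in> vecs n"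
  shows "card {M \<in> GL n. \<forall>a\<in>S. (\<lambda>i. M i a) = w0 a} = (\<Prod>i\<in>{card S..<n}. 2 ^ n - 2 ^ i)"
proof -
  have "card {M \<in> GL n. \<forall>a\<in>S. (\<lambda>i. M i a) = w0 a} = card (Ext n {0..<n} S w0)"
    by (rule bij_betw_same_card[OF GL_fiber_bij[OF assms(1)]])
  also have "\<dots> = (\<Prod>i\<in>{card S..<card {0..<n}}. 2 ^ n - 2 ^ i)"
    by (rule Ext_card[OF _ assms]) simp
  finally show ?thesis by simp
qed

lemma card_GL: "card (GL n) = (\<Prod>i<n. 2 ^ n - 2 ^ i)"
  using card_GL_fiber[of "{}" n] by (simp add: atLeast0LessThan)


declare sum_of_bool_eq[simp del]

definition Phi :: "nat \<Rightarrow> nat \<Rightarrow> (nat \<Rightarrow> nat) \<Rightarrow> (nat \<Rightarrow> nat \<Rightarrow> bool) \<Rightarrow> (nat \<Rightarrow> bool) \<Rightarrow> (nat \<Rightarrow> nat \<Rightarrow> bool)" where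
  "Phi n k \<sigma> M v = (\<lambda>j\<in>{0..k}. if j = 0 then v else cols n M (\<sigma> j))"

lemma vsum_image:
  assumes "inj_on \<sigma> C"
  shows "vsum w (\<sigma> ` C) = vsum (\<lambda>c. w (\<sigma> c)) C"
proof
  fix j
  have "{i\<in>\<sigma> ` C. w i j} = \<sigma> ` {c\<in>C. w (\<sigma> c) j}" by auto
  moreover have "card (\<sigma> ` {c\<in>C. w (\<sigma> c) j}) = card {c\<in>C. w (\<sigma> c) j}"
    by (rule card_image) (rule inj_on_subset[OF assms], blast)
  ultimately show "vsum w (\<sigma> ` C) j = vsum (\<lambda>c. w (\<sigma> c)) C j"
    unfolding vsum_def by simp
qed

lemma deriv_val_bit:
  "deriv_val f k u = ((\<Sum>C\<in>Pow {1..k}. of_bool (f (vadd (vsum u C) (u 0))) :: bit) = 1)"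
proof -
  have "(of_bool (deriv_val f k u) :: bit) = (\<Sum>C\<in>Pow {1..k}. of_bool (f (vadd (vsum u C) (u 0))))"
    unfolding deriv_val_def by (rule odd_card_bit) simp
  then show ?thesis by (metis of_bool_eq_one_iff)
qed

lemma anf_Phi:
  assumes M: "M \<in> mats n" and S: "S \<subseteq> {0..<n}" and bij: "bij_betw \<sigma> {1..k} S"
  shows "anf n (f \<circ> aff n M v) S = deriv_val f k (Phi n k \<sigma> M v)"
proof -
  let ?u = "Phi n k \<sigma> M v"
  have inj: "inj_on \<sigma> {1..k}" and img: "\<sigma> ` {1..k} = S" using bij by (auto simp: bij_betw_def)
  have "(\<Sum>T\<in>Pow S. of_bool ((f \<circ> aff n M v) (ind T)) :: bit)
      = (\<Sum>C\<in>Pow {1..k}. of_bool ((f \<circ> aff n M v) (ind (\<sigma> ` C))))"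
  proof -
    have "Pow S = image \<sigma> ` Pow {1..k}" using image_Pow_surj[OF img] by simp
    then show ?thesis
      using sum.reindex[OF inj_on_image_Pow[OF inj], of "\<lambda>T. of_bool ((f \<circ> aff n M v) (ind T)) :: bit"]
      by (simp add: comp_def)
  qed
  also have "\<dots> = (\<Sum>C\<in>Pow {1..k}. of_bool (f (vadd (vsum ?u C) (?u 0))))"
  proof (rule sum.cong[OF refl])
    fix C assume C: "C \<in> Pow {1..k}"
    have sub: "\<sigma> ` C \<subseteq> {0..<n}" using C img S by auto
    have injC: "inj_on \<sigma> C" using inj C by (auto intro: inj_on_subset)
    have "vsum ?u C = vsum (\<lambda>c. cols n M (\<sigma> c)) C"
      by (rule vsum_cong) (use C in \<open>auto simp: Phi_def\<close>)
    also have "\<dots> = vsum (cols n M) (\<sigma> ` C)" by (rule vsum_image[OF injC, symmetric])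
    also have "\<dots> = mulv n M (ind (\<sigma> ` C))" by (rule mulv_ind[OF M sub, symmetric])
    finally have e: "vsum ?u C = mulv n M (ind (\<sigma> ` C))" .
    have e0: "?u 0 = v" by (simp add: Phi_def)
    show "of_bool ((f \<circ> aff n M v) (ind (\<sigma> ` C))) = (of_bool (f (vadd (vsum ?u C) (?u 0))) :: bit)"
      unfolding e e0 by (simp add: aff_def)
  qed
  finally show ?thesis unfolding anf_eq anf0_def deriv_val_bit using S by simp
qed

lemma fiber_count:
  assumes P: "finite P" and Q: "finite Q" and into: "\<And>p. p \<in> P \<Longrightarrow> \<Phi> p \<in> Q"
    and fib: "\<And>u. u \<in> Q \<Longrightarrow> card {p\<in>P. \<Phi> p = u} = c" and R: "R \<subseteq> Q"
  shows "card {p\<in>P. \<Phi> p \<in> R} = c * card R"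
proof -
  have "{p\<in>P. \<Phi> p \<in> R} = (\<Union>u\<in>R. {p\<in>P. \<Phi> p = u})" by blast
  then have "card {p\<in>P. \<Phi> p \<in> R} = card (\<Union>u\<in>R. {p\<in>P. \<Phi> p = u})" by (rule arg_cong)
  also have "\<dots> = (\<Sum>u\<in>R. card {p\<in>P. \<Phi> p = u})"
    by (rule card_UN_disjoint) (use P Q R finite_subset in auto)
  also have "\<dots> = (\<Sum>u\<in>R. c)" using fib R by (intro sum.cong) auto
  finally show ?thesis by simp
qed

lemma indep_on_image1:
  assumes inj: "inj_on \<sigma> B" and ind: "indep_on (\<sigma> ` B) w"
  shows "indep_on B (\<lambda>c. w (\<sigma> c))"
  unfolding indep_on_def
proof (intro allI impI)
  fix C assume C: "C \<subseteq> B" "C \<noteq> {}"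
  have injC: "inj_on \<sigma> C" using inj C(1) by (rule inj_on_subset)
  have "\<sigma> ` C \<subseteq> \<sigma> ` B" "\<sigma> ` C \<noteq> {}" using C by auto
  then have "vsum w (\<sigma> ` C) \<noteq> vzero" using ind unfolding indep_on_def by blast
  then show "vsum (\<lambda>c. w (\<sigma> c)) C \<noteq> vzero" unfolding vsum_image[OF injC] .
qed

lemma indep_on_image2:
  assumes inj: "inj_on \<sigma> B" and ind: "indep_on B (\<lambda>c. w (\<sigma> c))"
  shows "indep_on (\<sigma> ` B) w"
  unfolding indep_on_def
proof (intro allI impI)
  fix D assume D: "D \<subseteq> \<sigma> ` B" "D \<noteq> {}"
  define C where "C = {c\<in>B. \<sigma> c \<in> D}"
  have DC: "D = \<sigma> ` C" using D(1) unfolding C_def by blast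
  have C: "C \<subseteq> B" "C \<noteq> {}" using D DC unfolding C_def by auto
  have injC: "inj_on \<sigma> C" using inj C(1) by (rule inj_on_subset)
  have "vsum (\<lambda>c. w (\<sigma> c)) C \<noteq> vzero" using ind C unfolding indep_on_def by blast
  then show "vsum w D \<noteq> vzero" unfolding DC vsum_image[OF injC] .
qed

lemma Phi_tuples:
  assumes M: "M \<in> GL n" and v: "v \<in> vecs n" and S: "S \<subseteq> {0..<n}" and bij: "bij_betw \<sigma> {1..k} S"
  shows "Phi n k \<sigma> M v \<in> tuples n k \<and> lin_indep k (Phi n k \<sigma> M v)"
proof -
  have g: "M \<in> mats n" "indep_on {0..<n} (cols n M)" using GL_char1[OF M] by auto
  have inj: "inj_on \<sigma> {1..k}" and img: "\<sigma> ` {1..k} = S" using bij by (auto simp: bij_betw_def)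
  have "Phi n k \<sigma> M v \<in> tuples n k"
    unfolding tuples_def Phi_def
  proof (rule restrict_PiE_iff[THEN iffD2], intro ballI)
    fix j assume j: "j \<in> {0..k}"
    show "(if j = 0 then v else cols n M (\<sigma> j)) \<in> vecs n"
    proof (cases "j = 0")
      case True then show ?thesis using v by simp
    next
      case False
      then have "\<sigma> j \<in> S" using j img by auto
      then have "\<sigma> j \<in> {0..<n}" using S by auto
      then show ?thesis using False cols_vecs[OF g(1)] by simp
    qed
  qed
  moreover have "lin_indep k (Phi n k \<sigma> M v)"
  proof -
    have "indep_on (\<sigma> ` {1..k}) (cols n M)"
      using indep_on_mono[OF _ g(2)] img S by simp
    then have i1: "indep_on {1..k} (\<lambda>c. cols n M (\<sigma> c))" by (rule indep_on_image1[OF inj])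
    have "indep_on {1..k} (Phi n k \<sigma> M v) = indep_on {1..k} (\<lambda>c. cols n M (\<sigma> c))"
      by (rule indep_on_cong) (auto simp: Phi_def)
    then show ?thesis using i1 lin_indep_eq by simp
  qed
  ultimately show ?thesis by blast
qed

lemma fiber_Phi:
  assumes S: "S \<subseteq> {0..<n}" and bij: "bij_betw \<sigma> {1..k} S"
    and u: "u \<in> tuples n k" "lin_indep k u"
  shows "card {p \<in> GL n \<times> vecs n. Phi n k \<sigma> (fst p) (snd p) = u} = (\<Prod>i\<in>{k..<n}. 2 ^ n - 2 ^ i)"
proof -
  have inj: "inj_on \<sigma> {1..k}" and img: "\<sigma> ` {1..k} = S" using bij by (auto simp: bij_betw_def)
  have cardS: "card S = k" using bij_betw_same_card[OF bij] by simp
  define w0 where "w0 a = u (inv_into {1..k} \<sigma> a)" for a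
  have w0s: "w0 (\<sigma> j) = u j" if "j \<in> {1..k}" for j
    unfolding w0_def using inv_into_f_f[OF inj that] by simp
  have uP: "u \<in> PiE {0..k} (\<lambda>_. vecs n)" using u(1) unfolding tuples_def .
  have key: "Phi n k \<sigma> M v = u \<longleftrightarrow> v = u 0 \<and> (\<forall>a\<in>S. (\<lambda>i. M i a) = w0 a)" for M v
  proof
    assume e: "Phi n k \<sigma> M v = u"
    have "v = u 0" using e[symmetric] by (simp add: Phi_def)
    moreover have "(\<lambda>i. M i a) = w0 a" if a: "a \<in> S" for a
    proof -
      obtain j where j: "j \<in> {1..k}" "a = \<sigma> j" using a img by blast
      have "a < n" using a S by auto
      then have "(\<lambda>i. M i a) = Phi n k \<sigma> M v j" using j by (auto simp: Phi_def cols_def)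
      then show ?thesis using e w0s[OF j(1)] j(2) by simp
    qed
    ultimately show "v = u 0 \<and> (\<forall>a\<in>S. (\<lambda>i. M i a) = w0 a)" by blast
  next
    assume e: "v = u 0 \<and> (\<forall>a\<in>S. (\<lambda>i. M i a) = w0 a)"
    show "Phi n k \<sigma> M v = u"
      unfolding Phi_def
    proof (rule extensionalityI[OF restrict_extensional])
      show "u \<in> extensional {0..k}" using uP by (simp add: PiE_def)
      fix j assume j: "j \<in> {0..k}"
      show "restrict (\<lambda>j. if j = 0 then v else cols n M (\<sigma> j)) {0..k} j = u j"
      proof (cases "j = 0")
        case True then show ?thesis using e j by simp
      next
        case False
        then have j1: "j \<in> {1..k}" using j by auto
        then have "\<sigma> j \<in> S" using img by auto
        then have "\<sigma> j < n" "(\<lambda>i. M i (\<sigma> j)) = w0 (\<sigma> j)" using S e by auto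
        then show ?thesis using j False w0s[OF j1] by (simp add: cols_def)
      qed
    qed
  qed
  have "{p \<in> GL n \<times> vecs n. Phi n k \<sigma> (fst p) (snd p) = u}
      = {M \<in> GL n. \<forall>a\<in>S. (\<lambda>i. M i a) = w0 a} \<times> {u 0}"
    using key uP by (auto simp: PiE_def Pi_def)
  then have "card {p \<in> GL n \<times> vecs n. Phi n k \<sigma> (fst p) (snd p) = u}
      = card {M \<in> GL n. \<forall>a\<in>S. (\<lambda>i. M i a) = w0 a}" by (simp add: card_cartesian_product)
  also have "\<dots> = (\<Prod>i\<in>{card S..<n}. 2 ^ n - 2 ^ i)"
  proof (rule card_GL_fiber[OF S])
    have "indep_on {1..k} (\<lambda>c. w0 (\<sigma> c))"
    proof -
      have "indep_on {1..k} (\<lambda>c. w0 (\<sigma> c)) = indep_on {1..k} u"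
        by (rule indep_on_cong) (simp add: w0s)
      then show ?thesis using u(2) lin_indep_eq by simp
    qed
    then show "indep_on S w0" using indep_on_image2[OF inj] img by simp
    show "\<forall>a\<in>S. w0 a \<in> vecs n"
    proof
      fix a assume "a \<in> S"
      then obtain j where j: "j \<in> {1..k}" "a = \<sigma> j" using img by blast
      then show "w0 a \<in> vecs n" using w0s uP by auto
    qed
  qed
  finally show ?thesis using cardS by simp
qed


declare sum_of_bool_eq[simp del]

lemma finite_tuples: "finite (tuples n k)"
  unfolding tuples_def by (rule finite_PiE) auto

lemma per_S:
  assumes S: "S \<subseteq> {0..<n}" "card S = k"
  shows "card (GL n \<times> vecs n) = (\<Prod>i\<in>{k..<n}. 2 ^ n - 2 ^ i) * card {u \<in> tuples n k. lin_indep k u}"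
    and "card {p \<in> GL n \<times> vecs n. anf n (f \<circ> aff n (fst p) (snd p)) S}
         = (\<Prod>i\<in>{k..<n}. 2 ^ n - 2 ^ i) * card {u \<in> tuples n k. lin_indep k u \<and> deriv_val f k u}"
proof -
  have fS: "finite S" using S(1) finite_subset by blast
  have "\<exists>\<sigma>. bij_betw \<sigma> {1..k} S" using S(2) fS by (subst bij_betw_iff_card) auto
  then obtain \<sigma> where bij: "bij_betw \<sigma> {1..k} S" by blast
  let ?P = "GL n \<times> vecs n"
  let ?Q = "{u \<in> tuples n k. lin_indep k u}"
  let ?c = "\<Prod>i\<in>{k..<n}. 2 ^ n - 2 ^ (i::nat) :: nat"
  let ?F = "\<lambda>p. Phi n k \<sigma> (fst p) (snd p)"
  have fP: "finite ?P" using finite_GL finite_vecs by blast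
  have fQ: "finite ?Q" using finite_tuples by simp
  have into: "?F p \<in> ?Q" if "p \<in> ?P" for p
    using Phi_tuples[of "fst p" n "snd p" S \<sigma> k] that S bij by auto
  have fib: "card {p\<in>?P. ?F p = u} = ?c" if "u \<in> ?Q" for u
    using fiber_Phi[OF S(1) bij] that by auto
  have "card {p\<in>?P. ?F p \<in> ?Q} = ?c * card ?Q"
    by (rule fiber_count[OF fP fQ into fib]) auto
  moreover have "{p\<in>?P. ?F p \<in> ?Q} = ?P" using into by blast
  ultimately show "card ?P = ?c * card ?Q" by simp
  have "card {p\<in>?P. ?F p \<in> {u \<in> tuples n k. lin_indep k u \<and> deriv_val f k u}}
      = ?c * card {u \<in> tuples n k. lin_indep k u \<and> deriv_val f k u}"
    by (rule fiber_count[OF fP fQ into fib]) auto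
  moreover have "{p\<in>?P. ?F p \<in> {u \<in> tuples n k. lin_indep k u \<and> deriv_val f k u}}
      = {p \<in> ?P. anf n (f \<circ> aff n (fst p) (snd p)) S}"
  proof -
    have "anf n (f \<circ> aff n (fst p) (snd p)) S = deriv_val f k (?F p)" if "p \<in> ?P" for p
    proof -
      have "fst p \<in> mats n" using that unfolding GL_def by auto
      then show ?thesis by (rule anf_Phi[OF _ S(1) bij])
    qed
    then show ?thesis using into by auto
  qed
  ultimately show "card {p \<in> ?P. anf n (f \<circ> aff n (fst p) (snd p)) S}
      = ?c * card {u \<in> tuples n k. lin_indep k u \<and> deriv_val f k u}" by simp
qed


declare sum_of_bool_eq[simp del]

lemma sum_add_dens:
  assumes "1 \<le> k" "k \<le> n"
  shows "(\<Sum>M\<in>GL n. \<Sum>v\<in>vecs n. dd n k (f \<circ> aff n M v))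
     = real ((\<Prod>i\<in>{k..<n}. 2 ^ n - 2 ^ i) * card {u \<in> tuples n k. lin_indep k u \<and> deriv_val f k u})"
proof -
  let ?SS = "{S. S \<subseteq> {0..<n} \<and> card S = k}"
  let ?P = "GL n \<times> vecs n"
  let ?A = "\<lambda>p S. anf n (f \<circ> aff n (fst p) (snd p)) S"
  let ?N = "(\<Prod>i\<in>{k..<n}. 2 ^ n - 2 ^ i) * card {u \<in> tuples n k. lin_indep k u \<and> deriv_val f k u}"
  have fSS: "finite ?SS" by (rule finite_subset[of _ "Pow {0..<n}"]) auto
  have cSS: "card ?SS = n choose k" using n_subsets[of "{0..<n}" k] by simp
  have C0: "real (n choose k) \<noteq> 0" using assms by simp
  have fP: "finite ?P" by (intro finite_cartesian_product finite_GL finite_vecs)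
  have dd_eq: "dd n k (f \<circ> aff n M v) = (\<Sum>S\<in>?SS. of_bool (?A (M, v) S)) / real (n choose k)" for M v
  proof -
    have "{S. S \<subseteq> {0..<n} \<and> card S = k \<and> anf n (f \<circ> aff n M v) S} = ?SS \<inter> {S. ?A (M, v) S}"
      by auto
    then show ?thesis unfolding dd_def using sum_of_bool_eq[OF fSS, of "?A (M, v)", where 'a=real]
      by simp
  qed
  have "(\<Sum>M\<in>GL n. \<Sum>v\<in>vecs n. dd n k (f \<circ> aff n M v))
      = (\<Sum>p\<in>?P. (\<Sum>S\<in>?SS. of_bool (?A p S)) / real (n choose k))"
    unfolding dd_eq sum.cartesian_product by (simp add: case_prod_beta)
  also have "\<dots> = (\<Sum>p\<in>?P. \<Sum>S\<in>?SS. (of_bool (?A p S) :: real)) / real (n choose k)"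
    by (simp add: sum_divide_distrib)
  also have "(\<Sum>p\<in>?P. \<Sum>S\<in>?SS. (of_bool (?A p S) :: real)) = (\<Sum>S\<in>?SS. \<Sum>p\<in>?P. of_bool (?A p S))"
    by (rule sum.swap)
  also have "\<dots> = (\<Sum>S\<in>?SS. real ?N)"
  proof (rule sum.cong[OF refl])
    fix S assume S: "S \<in> ?SS"
    have "(\<Sum>p\<in>?P. (of_bool (?A p S) :: real)) = real (card (?P \<inter> {p. ?A p S}))"
      by (simp add: sum_of_bool_eq fP)
    also have "?P \<inter> {p. ?A p S} = {p\<in>?P. ?A p S}" by blast
    also have "card {p\<in>?P. ?A p S} = ?N" using per_S(2)[of S n k f] S by simp
    finally show "(\<Sum>p\<in>?P. (of_bool (?A p S) :: real)) = real ?N" .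
  qed
  also have "\<dots> = real (n choose k) * real ?N" using cSS by simp
  also have "real (n choose k) * real ?N / real (n choose k) = real ?N" using C0 by simp
  finally show ?thesis .
qed

lemma prod_reindex_rev:
  fixes k n :: nat
  assumes "k \<le> n"
  shows "(\<Prod>i\<in>{n-k+1..n}. g i) = (\<Prod>j<k. g (n - j))"
proof (rule prod.reindex_bij_witness[where i="\<lambda>i. n - i" and j="\<lambda>j. n - j"])
  fix a assume a: "a \<in> {n-k+1..n}"
  then have a1: "n - k + 1 \<le> a" "a \<le> n" by auto
  show e: "n - (n - a) = a" using a1 by simp
  show "n - a \<in> {..<k}" using a1 assms by simp
  show "g (n - (n - a)) = g a" using e by simp
next
  fix b assume b: "b \<in> {..<k}"
  then have b1: "b < k" by simp
  show "n - (n - b) = b" using b1 assms by simp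
  show "n - b \<in> {n-k+1..n}" using b1 assms by simp
qed

lemma term_eq:
  assumes "j \<le> n"
  shows "(1 - 1 / 2 ^ (n - j) :: real) = (2 ^ n - 2 ^ j) / 2 ^ n"
proof -
  have e: "(2::real) ^ n = 2 ^ j * 2 ^ (n - j)" using assms by (simp add: power_add[symmetric])
  show ?thesis unfolding e by (simp add: field_simps)
qed

theorem theorem1:
  fixes n k :: nat and f :: "(nat \<Rightarrow> bool) \<Rightarrow> bool"
  assumes "1 \<le> k" and "k \<le> n"
  shows "dt n k f = add_dens n k f * (\<Prod>i\<in>{n-k+1..n}. (1 - 1 / 2 ^ i))
    \<and> add_dens n k f =
        real (card {u \<in> tuples n k. lin_indep k u \<and> deriv_val f k u}) /
        real (card {u \<in> tuples n k. lin_indep k u})"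
proof -
  let ?I = "card {u \<in> tuples n k. lin_indep k u}"
  let ?ID = "card {u \<in> tuples n k. lin_indep k u \<and> deriv_val f k u}"
  let ?c = "\<Prod>i\<in>{k..<n}. 2 ^ n - 2 ^ i :: nat"
  let ?a = "\<Prod>i\<in>{0..<k}. 2 ^ n - 2 ^ i :: nat"
  have pos: "(0::nat) < 2 ^ n - 2 ^ i" if "i < n" for i
    using that by (simp add: power_strict_increasing)
  have c0: "?c > 0"
  proof (intro prod_pos ballI)
    fix i assume "i \<in> {k..<n}" then have "i < n" by simp
    then show "0 < (2::nat) ^ n - 2 ^ i" by (rule pos)
  qed
  have a0: "?a > 0"
  proof (intro prod_pos ballI)
    fix i assume "i \<in> {0..<k}" then have "i < n" using assms by simp
    then show "0 < (2::nat) ^ n - 2 ^ i" by (rule pos)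
  qed
  obtain S where S: "S \<subseteq> {0..<n}" "card S = k"
  proof
    show "{0..<k} \<subseteq> {0..<n}" "card {0..<k} = k" using assms by auto
  qed
  have GV: "card (GL n \<times> vecs n) = ?c * ?I" by (rule per_S(1)[OF S])
  have "card (GL n \<times> vecs n) = (\<Prod>i<n. 2 ^ n - 2 ^ i) * 2 ^ n"
    by (simp add: card_cartesian_product card_GL card_vecs)
  also have "(\<Prod>i<n. 2 ^ n - 2 ^ i :: nat) = ?a * ?c"
    using prod.atLeastLessThan_concat[of 0 k n "\<lambda>i. 2 ^ n - 2 ^ i :: nat"] assms
    by (simp add: atLeast0LessThan)
  finally have "?c * ?I = ?c * (?a * 2 ^ n)" using GV by (simp add: ac_simps)
  then have Ieq: "?I = ?a * 2 ^ n" using c0 by simp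
  have Ipos: "0 < ?I" unfolding Ieq by (rule mult_pos_pos[OF a0]) simp
  have I0: "real ?I \<noteq> 0" using Ipos by simp
  have rprod: "(\<Prod>i<n. (2 ^ n - 2 ^ i :: real)) = real (\<Prod>i<n. 2 ^ n - 2 ^ i)"
  proof -
    have "(\<Prod>i<n. (2 ^ n - 2 ^ i :: real)) = (\<Prod>i<n. real (2 ^ n - 2 ^ i))"
    proof (rule prod.cong[OF refl])
      fix i assume "i \<in> {..<n}"
      then have "(2::nat) ^ i \<le> 2 ^ n" by (simp add: power_increasing)
      then show "(2 ^ n - 2 ^ i :: real) = real (2 ^ n - 2 ^ i)" by (simp add: of_nat_diff)
    qed
    then show ?thesis by (simp add: of_nat_prod)
  qed
  have den: "(2 ^ n * (\<Prod>i<n. (2 ^ n - 2 ^ i :: real))) = real (?c * ?I)"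
  proof -
    have "(2 ^ n * (\<Prod>i<n. (2 ^ n - 2 ^ i :: real))) = real (card (GL n \<times> vecs n))"
      unfolding rprod by (simp add: card_cartesian_product card_GL card_vecs)
    then show ?thesis using GV by simp
  qed
  have ad: "add_dens n k f = real ?ID / real ?I"
  proof -
    have "add_dens n k f = real (?c * ?ID) / real (?c * ?I)"
      unfolding add_dens_def sum_add_dens[OF assms] den ..
    also have "\<dots> = real ?ID / real ?I" using c0 by simp
    finally show ?thesis .
  qed
  have dsets: "{u \<in> tuples n k. deriv_val f k u} = {u \<in> tuples n k. lin_indep k u \<and> deriv_val f k u}"
    using dep_deriv by blast
  have dt: "dt n k f = real ?ID / 2 ^ ((k + 1) * n)"
    unfolding dt_def dsets ..
  have P: "(\<Prod>i\<in>{n-k+1..n}. (1 - 1 / 2 ^ i :: real)) = real ?I / 2 ^ ((k + 1) * n)"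
  proof -
    have "(\<Prod>i\<in>{n-k+1..n}. (1 - 1 / 2 ^ i :: real)) = (\<Prod>j<k. (1 - 1 / 2 ^ (n - j) :: real))"
      by (rule prod_reindex_rev[OF assms(2)])
    also have "\<dots> = (\<Prod>j<k. (2 ^ n - 2 ^ j) / 2 ^ n :: real)"
      using assms(2) by (intro prod.cong[OF refl] term_eq) auto
    also have "\<dots> = (\<Prod>j<k. (2 ^ n - 2 ^ j :: real)) / (2 ^ n) ^ k"
      by (simp add: prod_dividef)
    also have "(\<Prod>j<k. (2 ^ n - 2 ^ j :: real)) = real ?a"
    proof -
      have "(\<Prod>j<k. (2 ^ n - 2 ^ j :: real)) = (\<Prod>j<k. real (2 ^ n - 2 ^ j))"
      proof (rule prod.cong[OF refl])
        fix i assume "i \<in> {..<k}"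
        then have "(2::nat) ^ i \<le> 2 ^ n" using assms(2) by (simp add: power_increasing)
        then show "(2 ^ n - 2 ^ i :: real) = real (2 ^ n - 2 ^ i)" by (simp add: of_nat_diff)
      qed
      then show ?thesis by (simp add: of_nat_prod atLeast0LessThan)
    qed
    also have "real ?a / (2 ^ n) ^ k = real ?I / 2 ^ ((k + 1) * n)"
      unfolding Ieq by (simp add: power_mult[symmetric] power_add field_simps)
    finally show ?thesis .
  qed
  have "dt n k f = add_dens n k f * (\<Prod>i\<in>{n-k+1..n}. (1 - 1 / 2 ^ i))"
    unfolding dt ad P using I0 by simp
  then show ?thesis using ad by blast
qed


end
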